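(* Counting with multiplicity, the reverse characteristic polynomial $\psi(z)$ has exactly $k_p-I(\mu\ge0)$ nonzero roots with absolute value strictly less than $1$, exactly $k_q-I(\mu\le0)$ roots with absolute value strictly greater than $1$, and exactly $I(\mu=0)$ roots with absolute value equal to $1$ (where $I(\cdot)$ is the indicator function).
   Context: Fix an integer $k\ge1$ and nonnegative reals $p_1,\dots,p_k,q_1,\dots,q_k$ with $\sum_{j=1}^k(p_j+q_j)=1$, $\sum_{j=1}^k p_j>0$, $\sum_{j=1}^k q_j>0$, and such that $\gcd\{j: p_j+q_j>0\}=1$. Let $k_p=\max\{j:p_j>0\}$, $k_q=\max\{j:q_j>0\}$, and $\mu=\sum_{j=1}^k j(p_j-q_j)$. The reverse characteristic polynomial is $\psi(z)=\sum_{j=0}^{2k-1}\gamma_jz^j$ where $\gamma_j=-\sum_{\ell=k-j}^k p_\ell$ for $0\le j\le k-1$ and $\gamma_j=\sum_{\ell=j-k+1}^k q_\ell$ for $k\le j\le 2k-1$. *)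

theory Defs
  imports "HOL-Analysis.Analysis" "HOL-Computational_Algebra.Polynomial"
begin

text \<open>Coefficients gamma_j of the reverse characteristic polynomial; p, q are indexed 1..k.\<close>
definition rc_gamma :: "nat \<Rightarrow> (nat \<Rightarrow> real) \<Rightarrow> (nat \<Rightarrow> real) \<Rightarrow> nat \<Rightarrow> real" where
  "rc_gamma k p q j =
     (if j < k then - (\<Sum>l = k - j..k. p l)
      else if j \<le> 2 * k - 1 then (\<Sum>l = j - k + 1..k. q l) else 0)"

definition rc_psi :: "nat \<Rightarrow> (nat \<Rightarrow> real) \<Rightarrow> (nat \<Rightarrow> real) \<Rightarrow> complex poly" where
  "rc_psi k p q = (\<Sum>j<2 * k. monom (complex_of_real (rc_gamma k p q j)) j)"

definition roots_in :: "complex poly \<Rightarrow> complex set \<Rightarrow> nat" where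
  "roots_in f S = (\<Sum>z\<in>{z. poly f z = 0 \<and> z \<in> S}. order z f)"

end

theory Submission
  imports Defs "HOL-Complex_Analysis.Complex_Analysis" "HOL-Computational_Algebra.Fundamental_Theorem_Algebra"
begin


lemma zorder_poly:
  fixes f :: "complex poly"
  assumes "f \<noteq> 0"
  shows "zorder (poly f) a = int (order a f)"
proof -
  obtain q where q: "f = [:- a, 1:] ^ order a f * q" and nd: "\<not> [:- a, 1:] dvd q"
    using order_decomp[OF assms] by blast
  have qa: "poly q a \<noteq> 0" using nd by (simp add: poly_eq_0_iff_dvd)
  show ?thesis
  proof (rule zorder_eqI[where S=UNIV and g="poly q"])
    show "poly q holomorphic_on UNIV" by (auto intro!: holomorphic_intros)
    fix w assume "w \<in> (UNIV::complex set)" "w \<noteq> a"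
    show "poly f w = poly q w * (w - a) powi int (order a f)"
      by (subst q) (simp add: power_int_of_nat mult.commute)
  qed (use qa in auto)
qed



lemma wsum_eq:
  fixes f :: "complex poly"
  assumes f: "f \<noteq> 0" and r: "\<rho> > 0" and nz: "\<And>z. cmod z = \<rho> \<Longrightarrow> poly f z \<noteq> 0"
  shows "(\<Sum>p\<in>{p. poly f p = 0}. winding_number (circlepath 0 \<rho>) p * zorder (poly f) p)
       = of_nat (roots_in f {z. cmod z < \<rho>})"
proof -
  have fin: "finite {p. poly f p = 0}" using f poly_roots_finite by blast
  have "(\<Sum>p\<in>{p. poly f p = 0}. winding_number (circlepath 0 \<rho>) p * zorder (poly f) p)
      = (\<Sum>p\<in>{p. poly f p = 0}. if cmod p < \<rho> then of_nat (order p f) else 0)"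
  proof (rule sum.cong[OF refl])
    fix p assume "p \<in> {p. poly f p = 0}"
    then have "cmod p \<noteq> \<rho>" using nz by auto
    show "winding_number (circlepath 0 \<rho>) p * zorder (poly f) p =
          (if cmod p < \<rho> then of_nat (order p f) else 0)"
    proof (cases "cmod p < \<rho>")
      case True
      then have "winding_number (circlepath 0 \<rho>) p = 1"
        by (intro winding_number_circlepath) simp
      then show ?thesis using True zorder_poly[OF f] by simp
    next
      case False
      with \<open>cmod p \<noteq> \<rho>\<close> have "cmod p > \<rho>" by simp
      have "winding_number (circlepath 0 \<rho>) p = 0"
        by (rule winding_number_zero_outside[where s="cball 0 \<rho>"])
           (use \<open>cmod p > \<rho>\<close> r in \<open>auto simp: sphere_def\<close>)
      then show ?thesis using False by simp
    qed
  qed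
  also have "\<dots> = (\<Sum>p\<in>{p. poly f p = 0 \<and> p \<in> {z. cmod z < \<rho>}}. of_nat (order p f))"
    using sum.inter_filter[OF fin, of "\<lambda>p. of_nat (order p f) :: complex" "\<lambda>p. cmod p < \<rho>"]
    by (simp add: conj_commute)
  also have "\<dots> = of_nat (roots_in f {z. cmod z < \<rho>})"
    unfolding roots_in_def by simp
  finally show ?thesis .
qed

lemma rouche_poly:
  fixes P Q :: "complex poly"
  assumes r: "\<rho> > 0" and dom: "\<And>z. cmod z = \<rho> \<Longrightarrow> cmod (poly Q z) < cmod (poly P z)"
  shows "roots_in (P + Q) {z. cmod z < \<rho>} = roots_in P {z. cmod z < \<rho>}"
proof -
  have nzP: "poly P z \<noteq> 0" if "cmod z = \<rho>" for z
    using dom[OF that] by auto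
  have nzPQ: "poly (P + Q) z \<noteq> 0" if "cmod z = \<rho>" for z
  proof
    assume "poly (P + Q) z = 0"
    then have "poly P z = - poly Q z" by (simp add: eq_neg_iff_add_eq_0)
    then show False using dom[OF that] by simp
  qed
  have s: "cmod (complex_of_real \<rho>) = \<rho>" using r by simp
  have P0: "P \<noteq> 0" using nzP[OF s] by auto
  have PQ0: "P + Q \<noteq> 0" using nzPQ[OF s] by (metis poly_0)
  have eq: "(\<lambda>p. poly P p + poly Q p) = poly (P + Q)" by auto
  have "(\<Sum>p\<in>{p\<in>UNIV. poly P p + poly Q p = 0}. winding_number (circlepath 0 \<rho>) p * zorder (\<lambda>p. poly P p + poly Q p) p)
          = (\<Sum>p\<in>{p\<in>UNIV. poly P p = 0}. winding_number (circlepath 0 \<rho>) p * zorder (poly P) p)"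
  proof (rule Rouche_theorem)
    show "finite {p \<in> UNIV. poly P p + poly Q p = 0}"
      using poly_roots_finite[OF PQ0] by simp
    show "finite {p \<in> UNIV. poly P p = 0}"
      using poly_roots_finite[OF P0] by simp
    show "\<forall>z\<in>path_image (circlepath 0 \<rho>). cmod (poly Q z) < cmod (poly P z)"
      using dom r by (auto simp: sphere_def)
  qed (auto intro!: holomorphic_intros)
  then have "of_nat (roots_in (P + Q) {z. cmod z < \<rho>}) = (of_nat (roots_in P {z. cmod z < \<rho>}) :: complex)"
    using wsum_eq[OF PQ0 r nzPQ] wsum_eq[OF P0 r nzP] by (simp add: eq)
  then show ?thesis by (simp only: of_nat_eq_iff)
qed



locale rw =
  fixes k :: nat and p q :: "nat \<Rightarrow> real"
  assumes k1: "k \<ge> 1"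
    and pnn: "\<And>j. j \<in> {1..k} \<Longrightarrow> p j \<ge> 0"
    and qnn: "\<And>j. j \<in> {1..k} \<Longrightarrow> q j \<ge> 0"
    and sum1: "(\<Sum>j = 1..k. p j + q j) = 1"
    and psum: "(\<Sum>j = 1..k. p j) > 0"
    and qsum: "(\<Sum>j = 1..k. q j) > 0"
    and gcd1: "Gcd {j \<in> {1..k}. p j + q j > 0} = 1"
begin

definition "kp = Max {j \<in> {1..k}. p j > 0}"
definition "kq = Max {j \<in> {1..k}. q j > 0}"
definition "mu = (\<Sum>j = 1..k. real j * (p j - q j))"

lemma kp_props: "kp \<in> {1..k}" "p kp > 0" "\<And>l. l \<in> {1..k} \<Longrightarrow> kp < l \<Longrightarrow> p l = 0"
proof -
  let ?A = "{j \<in> {1..k}. p j > 0}"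
  have ne: "?A \<noteq> {}"
  proof
    assume "?A = {}"
    then have "\<And>j. j \<in> {1..k} \<Longrightarrow> p j = 0" using pnn by force
    then have "(\<Sum>j = 1..k. p j) = 0" by simp
    then show False using psum by simp
  qed
  have fin: "finite ?A" by simp
  have "kp \<in> ?A" unfolding kp_def using Max_in[OF fin ne] .
  then show "kp \<in> {1..k}" "p kp > 0" by auto
  fix l assume l: "l \<in> {1..k}" "kp < l"
  show "p l = 0"
  proof (rule ccontr)
    assume "p l \<noteq> 0"
    then have "l \<in> ?A" using pnn[OF l(1)] l(1) by auto
    then have "l \<le> kp" unfolding kp_def using Max_ge[OF fin] by blast
    then show False using l by simp
  qed
qed

lemma kq_props: "kq \<in> {1..k}" "q kq > 0" "\<And>l. l \<in> {1..k} \<Longrightarrow> kq < l \<Longrightarrow> q l = 0"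
proof -
  let ?A = "{j \<in> {1..k}. q j > 0}"
  have ne: "?A \<noteq> {}"
  proof
    assume "?A = {}"
    then have "\<And>j. j \<in> {1..k} \<Longrightarrow> q j = 0" using qnn by force
    then have "(\<Sum>j = 1..k. q j) = 0" by simp
    then show False using qsum by simp
  qed
  have fin: "finite ?A" by simp
  have "kq \<in> ?A" unfolding kq_def using Max_in[OF fin ne] .
  then show "kq \<in> {1..k}" "q kq > 0" by auto
  fix l assume l: "l \<in> {1..k}" "kq < l"
  show "q l = 0"
  proof (rule ccontr)
    assume "q l \<noteq> 0"
    then have "l \<in> ?A" using qnn[OF l(1)] l(1) by auto
    then have "l \<le> kq" unfolding kq_def using Max_ge[OF fin] by blast
    then show False using l by simp
  qed
qed

definition Phi :: "real \<Rightarrow> real" where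
  "Phi x = (\<Sum>l = 1..k. p l / x ^ l + q l * x ^ l)"

definition Gp :: "real \<Rightarrow> complex poly" where
  "Gp c = (\<Sum>l = 1..k. monom (complex_of_real (p l)) (kp - l))
        + (\<Sum>l = 1..k. monom (complex_of_real (q l)) (kp + l)) - monom (complex_of_real c) kp"

lemma poly_Gp: "poly (Gp c) z = (\<Sum>l = 1..k. of_real (p l) * z ^ (kp - l))
        + (\<Sum>l = 1..k. of_real (q l) * z ^ (kp + l)) - of_real c * z ^ kp"
  unfolding Gp_def by (simp add: poly_sum poly_monom)

lemma ppow: "x \<noteq> 0 \<Longrightarrow> l \<in> {1..k} \<Longrightarrow> p l * x ^ (kp - l) = x ^ kp * (p l / x ^ l)"
  for x :: real
proof (cases "l \<le> kp")
  case True
  assume "x \<noteq> 0"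
  then show ?thesis using True by (simp add: power_diff)
next
  case False
  assume "l \<in> {1..k}"
  then show ?thesis using False kp_props(3) by simp
qed

lemma poly_Gp_real:
  assumes "x > 0"
  shows "poly (Gp c) (of_real x) = of_real (x ^ kp * (Phi x - c))"
proof -
  have "poly (Gp c) (of_real x) = of_real ((\<Sum>l = 1..k. p l * x ^ (kp - l))
        + (\<Sum>l = 1..k. q l * x ^ (kp + l)) - c * x ^ kp)"
    by (simp add: poly_Gp)
  also have "(\<Sum>l = 1..k. p l * x ^ (kp - l)) = (\<Sum>l = 1..k. x ^ kp * (p l / x ^ l))"
    using assms by (intro sum.cong) (auto simp: ppow)
  also have "(\<Sum>l = 1..k. q l * x ^ (kp + l)) = (\<Sum>l = 1..k. x ^ kp * (q l * x ^ l))"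
    by (intro sum.cong) (auto simp: power_add)
  finally show ?thesis
    by (simp add: Phi_def sum.distrib sum_distrib_left algebra_simps)
qed

lemma Phi_nonneg: "x > 0 \<Longrightarrow> Phi x \<ge> 0"
  unfolding Phi_def using pnn qnn by (intro sum_nonneg) auto

lemma Gp_0: "poly (Gp c) 0 = of_real (p kp)"
proof -
  have kp1: "kp \<ge> 1" using kp_props(1) by simp
  have "(\<Sum>l = 1..k. of_real (p l) * (0::complex) ^ (kp - l)) = of_real (p kp)"
  proof -
    have "(\<Sum>l = 1..k. of_real (p l) * (0::complex) ^ (kp - l))
        = (\<Sum>l = 1..k. if l = kp then of_real (p l) else 0)"
    proof (intro sum.cong refl)
      fix l assume l: "l \<in> {1..k}"
      show "of_real (p l) * (0::complex) ^ (kp - l) = (if l = kp then of_real (p l) else 0)"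
        using kp_props(3)[OF l] by (cases "l = kp"; cases "l < kp") auto
    qed
    also have "\<dots> = of_real (p kp)" using kp_props(1) by simp
    finally show ?thesis .
  qed
  moreover have "(\<Sum>l = 1..k. of_real (q l) * (0::complex) ^ (kp + l)) = 0" by (intro sum.neutral ballI) auto
  ultimately show ?thesis using kp1 by (simp add: poly_Gp)
qed

lemma Gp_nz: "Gp c \<noteq> 0"
  using Gp_0[of c] kp_props(2) by (metis of_real_eq_0_iff order_less_irrefl poly_0)

lemma lemmaA:
  assumes r: "\<rho> > 0" and lt: "Phi \<rho> < c"
  shows "roots_in (Gp c) {z. cmod z < \<rho>} = kp"
proof -
  have c0: "c > 0" using Phi_nonneg[OF r] lt by simp
  define S where "S = (\<Sum>l = 1..k. monom (complex_of_real (p l)) (kp - l))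
        + (\<Sum>l = 1..k. monom (complex_of_real (q l)) (kp + l))"
  define P where "P = monom (- complex_of_real c) kp"
  have GPS: "Gp c = P + S" unfolding Gp_def S_def P_def by (simp add: minus_monom[symmetric])
  have "roots_in (P + S) {z. cmod z < \<rho>} = roots_in P {z. cmod z < \<rho>}"
  proof (rule rouche_poly[OF r])
    fix z :: complex assume z: "cmod z = \<rho>"
    have "cmod (poly S z) \<le> (\<Sum>l = 1..k. p l * \<rho> ^ (kp - l)) + (\<Sum>l = 1..k. q l * \<rho> ^ (kp + l))"
    proof -
      have "cmod (poly S z) \<le> cmod (\<Sum>l = 1..k. of_real (p l) * z ^ (kp - l))
             + cmod (\<Sum>l = 1..k. of_real (q l) * z ^ (kp + l))"
        unfolding S_def by (simp add: poly_sum poly_monom norm_triangle_ineq)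
      also have "\<dots> \<le> (\<Sum>l = 1..k. p l * \<rho> ^ (kp - l)) + (\<Sum>l = 1..k. q l * \<rho> ^ (kp + l))"
      proof (intro add_mono)
        show "cmod (\<Sum>l = 1..k. of_real (p l) * z ^ (kp - l)) \<le> (\<Sum>l = 1..k. p l * \<rho> ^ (kp - l))"
          by (rule order.trans[OF norm_sum]) (use pnn z in \<open>auto simp: norm_mult norm_power intro!: sum_mono\<close>)
        show "cmod (\<Sum>l = 1..k. of_real (q l) * z ^ (kp + l)) \<le> (\<Sum>l = 1..k. q l * \<rho> ^ (kp + l))"
          by (rule order.trans[OF norm_sum]) (use qnn z in \<open>auto simp: norm_mult norm_power intro!: sum_mono\<close>)
      qed
      finally show ?thesis .
    qed
    also have "\<dots> = \<rho> ^ kp * Phi \<rho>"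
    proof -
      have "(\<Sum>l = 1..k. p l * \<rho> ^ (kp - l)) = (\<Sum>l = 1..k. \<rho> ^ kp * (p l / \<rho> ^ l))"
        using r by (intro sum.cong) (auto simp: ppow)
      moreover have "(\<Sum>l = 1..k. q l * \<rho> ^ (kp + l)) = (\<Sum>l = 1..k. \<rho> ^ kp * (q l * \<rho> ^ l))"
        by (intro sum.cong) (auto simp: power_add)
      ultimately show ?thesis unfolding Phi_def by (simp only: sum.distrib distrib_left sum_distrib_left)
    qed
    also have "\<dots> < \<rho> ^ kp * c" using lt r by simp
    also have "\<dots> = cmod (poly P z)" unfolding P_def using z c0 r by (simp add: poly_monom norm_mult norm_power)
    finally show "cmod (poly S z) < cmod (poly P z)" .
  qed
  moreover have "roots_in P {z. cmod z < \<rho>} = kp"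
  proof -
    have roots: "{z. poly P z = 0 \<and> z \<in> {z. cmod z < \<rho>}} = {0}"
      unfolding P_def using c0 r kp_props(1) by (auto simp: poly_monom)
    have "P = smult (- complex_of_real c) ([:- 0, 1:] ^ kp)"
      unfolding P_def by (simp add: monom_altdef)
    then have "order 0 P = kp" using c0 by (simp add: order_smult order_power_n_n del: minus_zero)
    then show ?thesis unfolding roots_in_def roots by simp
  qed
  ultimately show ?thesis using GPS by simp
qed

end

context rw begin

lemma Gp_shift: "Gp c = Gp 1 + monom (complex_of_real (1 - c)) kp"
proof -
  have "poly (Gp c) = poly (Gp 1 + monom (complex_of_real (1 - c)) kp)"
    by (rule ext) (simp add: poly_Gp poly_monom algebra_simps)
  then show ?thesis by (simp add: poly_eq_poly_eq_iff)
qed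

lemma lemmaB:
  assumes r: "\<rho> > 0" and nz: "\<And>z. cmod z = \<rho> \<Longrightarrow> poly (Gp 1) z \<noteq> 0"
  shows "\<exists>\<epsilon>>0. \<forall>c. \<bar>c - 1\<bar> < \<epsilon> \<longrightarrow>
           roots_in (Gp c) {z. cmod z < \<rho>} = roots_in (Gp 1) {z. cmod z < \<rho>}"
proof -
  have "\<exists>x\<in>sphere 0 \<rho>. \<forall>y\<in>sphere 0 \<rho>. cmod (poly (Gp 1) x) \<le> cmod (poly (Gp 1) y)"
    by (rule continuous_attains_inf) (use r in \<open>auto intro!: continuous_intros\<close>)
  then obtain z0 where z0: "cmod z0 = \<rho>" and mn: "\<And>y. cmod y = \<rho> \<Longrightarrow> cmod (poly (Gp 1) z0) \<le> cmod (poly (Gp 1) y)"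
    by auto
  define m where "m = cmod (poly (Gp 1) z0)"
  have m0: "m > 0" unfolding m_def using nz[OF z0] by simp
  define \<epsilon> where "\<epsilon> = m / \<rho> ^ kp"
  have e0: "\<epsilon> > 0" unfolding \<epsilon>_def using m0 r by simp
  show ?thesis
  proof (intro exI[of _ \<epsilon>] conjI allI impI e0)
    fix c assume c: "\<bar>c - 1\<bar> < \<epsilon>"
    have "roots_in (Gp 1 + monom (complex_of_real (1 - c)) kp) {z. cmod z < \<rho>} = roots_in (Gp 1) {z. cmod z < \<rho>}"
    proof (rule rouche_poly[OF r])
      fix z :: complex assume z: "cmod z = \<rho>"
      have "cmod (poly (monom (complex_of_real (1 - c)) kp) z) = cmod (complex_of_real (1 - c)) * cmod z ^ kp"
        by (simp only: poly_monom norm_mult norm_power)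
      also have "\<dots> = \<bar>1 - c\<bar> * \<rho> ^ kp"
        using z by (simp only: norm_of_real)
      also have "\<dots> < \<epsilon> * \<rho> ^ kp" using c r by (simp add: abs_minus_commute)
      also have "\<dots> = m" unfolding \<epsilon>_def using r by simp
      also have "\<dots> \<le> cmod (poly (Gp 1) z)" unfolding m_def using mn[OF z] .
      finally show "cmod (poly (monom (complex_of_real (1 - c)) kp) z) < cmod (poly (Gp 1) z)" .
    qed
    then show "roots_in (Gp c) {z. cmod z < \<rho>} = roots_in (Gp 1) {z. cmod z < \<rho>}"
      using Gp_shift[of c] by simp
  qed
qed

lemma Phi_ineq:
  assumes x: "x > 0" "x \<noteq> 1"
  shows "Phi x - 1 > - mu * (x - 1)"
proof -
  define D where "D l = p l * (1 / x ^ l - 1 - real l * (1 - x)) + q l * (x ^ l - 1 - real l * (x - 1))" for l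
  have Dnn: "D l \<ge> 0" and Dpos: "p l > 0 \<Longrightarrow> D l > 0" if l: "l \<in> {1..k}" for l
  proof -
    have b1: "1 + real l * (x - 1) \<le> x ^ l"
      using Bernoulli_inequality[of "x - 1" l] x by simp
    have b2: "1 + real l * (1 / x - 1) \<le> (1 / x) ^ l"
      using Bernoulli_inequality[of "1/x - 1" l] x by simp
    have "1 / x - 1 > 1 - x"
    proof -
      have "(x - 1)^2 > 0" using x by simp
      then have "1 > x * (2 - x)" by (simp add: power2_eq_square algebra_simps)
      then show ?thesis using x by (simp add: field_simps)
    qed
    then have b3: "real l * (1 / x - 1) > real l * (1 - x)" using l by simp
    have t1: "1 / x ^ l - 1 - real l * (1 - x) > 0" using b2 b3 by (simp add: power_one_over)
    have t2: "x ^ l - 1 - real l * (x - 1) \<ge> 0" using b1 by simp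
    show "D l \<ge> 0" unfolding D_def using t1 t2 pnn[OF l] qnn[OF l] by (intro add_nonneg_nonneg mult_nonneg_nonneg) auto
    assume "p l > 0"
    then show "D l > 0" unfolding D_def using t1 t2 qnn[OF l]
      by (intro add_pos_nonneg mult_pos_pos mult_nonneg_nonneg) auto
  qed
  have "(\<Sum>l = 1..k. D l) > 0"
    by (rule sum_pos2[of _ kp]) (use kp_props Dnn Dpos in auto)
  moreover have "(\<Sum>l = 1..k. D l) = Phi x - (\<Sum>l = 1..k. p l + q l) + mu * (x - 1)"
    unfolding D_def Phi_def mu_def
    by (simp add: sum.distrib sum_subtractf sum_distrib_left sum_distrib_right algebra_simps)
  ultimately show ?thesis using sum1 by simp
qed

lemma Phi_1: "Phi 1 = 1"
  unfolding Phi_def using sum1 by simp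

lemma Phi_deriv: "(Phi has_real_derivative - mu) (at 1)"
proof -
  have "(Phi has_real_derivative (\<Sum>l = 1..k. real l * q l - p l * real l)) (at 1)"
    unfolding Phi_def
    by (rule derivative_eq_intros refl | simp)+
  moreover have "(\<Sum>l = 1..k. real l * q l - p l * real l) = (\<Sum>l = 1..k. - (real l * (p l - q l)))"
    by (rule sum.cong) (auto simp: algebra_simps)
  then have "(\<Sum>l = 1..k. real l * q l - p l * real l) = - mu"
    unfolding mu_def by (simp only: sum_negf)
  ultimately show ?thesis by simp
qed

end


lemma pderiv_sum': "pderiv (sum f A) = (\<Sum>x\<in>A. pderiv (f x))"
  using higher_pderiv_sum[of 1 f A] by simp

lemma pow_gcd_one:
  fixes z :: complex
  assumes "z ^ a = 1" "z ^ b = 1"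
  shows "z ^ gcd a b = 1"
proof (cases "a = 0")
  case True then show ?thesis using assms by simp
next
  case False
  then obtain x y where xy: "a * x = b * y + gcd a b" using bezout_nat by blast
  have "1 = z ^ (a * x)" using assms by (simp add: power_mult)
  also have "\<dots> = z ^ (b * y) * z ^ gcd a b" by (simp add: xy power_add)
  also have "\<dots> = z ^ gcd a b" using assms by (simp add: power_mult)
  finally show ?thesis by simp
qed

lemma pow_Gcd_one:
  fixes z :: complex
  assumes "finite A" "\<And>l. l \<in> A \<Longrightarrow> z ^ l = 1"
  shows "z ^ Gcd A = 1"
  using assms
proof (induction A rule: finite_induct)
  case empty then show ?case by simp
next
  case (insert a A)
  then show ?case by (simp add: pow_gcd_one)
qed

lemma unit_Re_one:
  fixes w :: complex
  assumes "cmod w = 1" "Re w = 1"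
  shows "w = 1"
proof -
  have "(Re w)^2 + (Im w)^2 = 1" using cmod_power2[of w] assms(1) by simp
  then have "(Im w)^2 = 0" using assms(2) by simp
  then have "Im w = 0" by simp
  then show ?thesis using assms(2) by (simp add: complex_eq_iff)
qed

lemma real_nat_pred_mult: "real (n - 1) * real n = real n * (real n - 1)"
  by (cases n) auto

context rw begin

lemma circle_root:
  assumes z: "cmod z = 1" and r: "poly (Gp 1) z = 0"
  shows "z = 1"
proof -
  have zc: "z * cnj z = 1" using z complex_norm_square[of z] by simp
  have e: "z ^ kp = (\<Sum>l = 1..k. of_real (p l) * z ^ (kp - l)) + (\<Sum>l = 1..k. of_real (q l) * z ^ (kp + l))"
    using r by (simp add: poly_Gp)
  have "1 = z ^ kp * cnj z ^ kp" by (simp add: zc power_mult_distrib[symmetric])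
  also have "\<dots> = (\<Sum>l = 1..k. of_real (p l) * (z ^ (kp - l) * cnj z ^ kp)) + (\<Sum>l = 1..k. of_real (q l) * (z ^ (kp + l) * cnj z ^ kp))"
    by (subst e) (simp add: sum_distrib_right distrib_right mult.assoc)
  also have "(\<Sum>l = 1..k. of_real (p l) * (z ^ (kp - l) * cnj z ^ kp)) = (\<Sum>l = 1..k. of_real (p l) * cnj z ^ l)"
  proof (rule sum.cong[OF refl])
    fix l assume l: "l \<in> {1..k}"
    show "of_real (p l) * (z ^ (kp - l) * cnj z ^ kp) = of_real (p l) * cnj z ^ l"
    proof (cases "l \<le> kp")
      case True
      then have "cnj z ^ kp = cnj z ^ (kp - l) * cnj z ^ l" by (simp add: power_add[symmetric])
      then have "z ^ (kp - l) * cnj z ^ kp = (z * cnj z) ^ (kp - l) * cnj z ^ l"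
        by (simp add: power_mult_distrib mult.assoc)
      then show ?thesis using zc by simp
    next
      case False then show ?thesis using kp_props(3)[OF l] by simp
    qed
  qed
  also have "(\<Sum>l = 1..k. of_real (q l) * (z ^ (kp + l) * cnj z ^ kp)) = (\<Sum>l = 1..k. of_real (q l) * z ^ l)"
  proof (rule sum.cong[OF refl])
    fix l
    have "z ^ (kp + l) * cnj z ^ kp = (z * cnj z) ^ kp * z ^ l" by (simp add: power_add power_mult_distrib algebra_simps)
    then show "of_real (q l) * (z ^ (kp + l) * cnj z ^ kp) = of_real (q l) * z ^ l" using zc by simp
  qed
  finally have eq1: "1 = (\<Sum>l = 1..k. of_real (p l) * cnj z ^ l) + (\<Sum>l = 1..k. of_real (q l) * z ^ l)" .
  have "1 = Re ((\<Sum>l = 1..k. of_real (p l) * cnj z ^ l) + (\<Sum>l = 1..k. of_real (q l) * z ^ l))"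
    using arg_cong[OF eq1, of Re] by simp
  also have "\<dots> = (\<Sum>l = 1..k. (p l + q l) * Re (z ^ l))"
    by (simp add: Re_sum sum.distrib[symmetric] algebra_simps flip: complex_cnj_power)
  finally have eq2: "(\<Sum>l = 1..k. (p l + q l) * (1 - Re (z ^ l))) = 0"
    using sum1 by (simp add: algebra_simps sum_subtractf sum.distrib)
  have nn: "\<forall>l\<in>{1..k}. (p l + q l) * (1 - Re (z ^ l)) \<ge> 0"
  proof
    fix l assume l: "l \<in> {1..k}"
    have "Re (z ^ l) \<le> cmod (z ^ l)" by (rule complex_Re_le_cmod)
    also have "\<dots> = 1" using z by (simp add: norm_power)
    finally show "(p l + q l) * (1 - Re (z ^ l)) \<ge> 0" using pnn[OF l] qnn[OF l] by simp
  qed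
  have all0: "\<forall>l\<in>{1..k}. (p l + q l) * (1 - Re (z ^ l)) = 0"
  proof -
    have "(\<Sum>l = 1..k. (p l + q l) * (1 - Re (z ^ l))) = 0 \<longleftrightarrow> (\<forall>l\<in>{1..k}. (p l + q l) * (1 - Re (z ^ l)) = 0)"
      by (rule sum_nonneg_eq_0_iff) (use nn in auto)
    then show ?thesis using eq2 by blast
  qed
  have "z ^ Gcd {j \<in> {1..k}. p j + q j > 0} = 1"
  proof (rule pow_Gcd_one)
    fix l assume "l \<in> {j \<in> {1..k}. p j + q j > 0}"
    then have l: "l \<in> {1..k}" "p l + q l > 0" by auto
    have "(p l + q l) * (1 - Re (z ^ l)) = 0" using all0 l(1) by blast
    then have "1 - Re (z ^ l) = 0" using l(2) by simp
    then have "Re (z ^ l) = 1" by simp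
    then show "z ^ l = 1" by (intro unit_Re_one) (simp_all add: z norm_power)
  qed simp
  then show ?thesis using gcd1 by simp
qed

lemma sumpq: "(\<Sum>l = 1..k. p l) + (\<Sum>l = 1..k. q l) = 1"
  using sum1 by (simp add: sum.distrib)

lemma Gp1_root: "poly (Gp 1) 1 = 0"
proof -
  have "poly (Gp 1) 1 = of_real ((\<Sum>l = 1..k. p l) + (\<Sum>l = 1..k. q l) - 1)" by (simp add: poly_Gp)
  then show ?thesis by (simp only: sumpq) simp
qed

lemma d1_val: "poly (pderiv (Gp 1)) 1 = of_real (- mu)"
proof -
  have A: "poly (pderiv (Gp 1)) 1 = of_real ((\<Sum>l = 1..k. real (kp - l) * p l) + (\<Sum>l = 1..k. real (kp + l) * q l) - real kp)"
    by (simp add: Gp_def pderiv_sum' pderiv_add pderiv_diff pderiv_monom poly_sum poly_monom)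
  have B: "(\<Sum>l = 1..k. real (kp - l) * p l) = (\<Sum>l = 1..k. (real kp - real l) * p l)"
  proof (rule sum.cong[OF refl])
    fix l assume l: "l \<in> {1..k}"
    show "real (kp - l) * p l = (real kp - real l) * p l"
      using kp_props(3)[OF l] by (cases "l \<le> kp") (auto simp: of_nat_diff)
  qed
  have C: "(\<Sum>l = 1..k. (real kp - real l) * p l) + (\<Sum>l = 1..k. real (kp + l) * q l) - real kp
      = real kp * ((\<Sum>l = 1..k. p l) + (\<Sum>l = 1..k. q l) - 1) - mu"
    unfolding mu_def by (simp add: algebra_simps sum.distrib sum_subtractf sum_distrib_left)
  have "(\<Sum>l = 1..k. real (kp - l) * p l) + (\<Sum>l = 1..k. real (kp + l) * q l) - real kp = - mu"
    using B C sumpq by simp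
  then show ?thesis using A by simp
qed

lemma d2_val: "poly (pderiv (pderiv (Gp 1))) 1 =
   of_real ((\<Sum>l = 1..k. real l ^ 2 * (p l + q l)) + (1 - 2 * real kp) * mu)"
proof -
  have A: "poly (pderiv (pderiv (Gp 1))) 1 = of_real ((\<Sum>l = 1..k. real (kp - l - 1) * (real (kp - l) * p l))
      + (\<Sum>l = 1..k. real (kp + l - 1) * (real (kp + l) * q l)) - real (kp - 1) * real kp)"
    by (simp add: Gp_def pderiv_sum' pderiv_add pderiv_diff pderiv_monom poly_sum poly_monom)
  have B1: "(\<Sum>l = 1..k. real (kp - l - 1) * (real (kp - l) * p l)) = (\<Sum>l = 1..k. (real kp - real l) * (real kp - real l - 1) * p l)"
  proof (rule sum.cong[OF refl])
    fix l assume l: "l \<in> {1..k}"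
    show "real (kp - l - 1) * (real (kp - l) * p l) = (real kp - real l) * (real kp - real l - 1) * p l"
    proof (cases "l \<le> kp")
      case True
      have "real (kp - l - 1) * (real (kp - l) * p l) = (real (kp - l - 1) * real (kp - l)) * p l" by simp
      also have "\<dots> = real (kp - l) * (real (kp - l) - 1) * p l" by (simp only: real_nat_pred_mult)
      finally show ?thesis using True by (simp add: of_nat_diff)
    next
      case False then show ?thesis using kp_props(3)[OF l] by simp
    qed
  qed
  have B2: "(\<Sum>l = 1..k. real (kp + l - 1) * (real (kp + l) * q l)) = (\<Sum>l = 1..k. (real kp + real l) * (real kp + real l - 1) * q l)"
  proof (rule sum.cong[OF refl])
    fix l
    have "real (kp + l - 1) * (real (kp + l) * q l) = (real (kp + l - 1) * real (kp + l)) * q l" by simp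
    also have "\<dots> = real (kp + l) * (real (kp + l) - 1) * q l" by (simp only: real_nat_pred_mult)
    finally show "real (kp + l - 1) * (real (kp + l) * q l) = (real kp + real l) * (real kp + real l - 1) * q l" by simp
  qed
  have B3: "real (kp - 1) * real kp = real kp * (real kp - 1)" by (rule real_nat_pred_mult)
  have C1: "(\<Sum>l = 1..k. (real kp - real l) * (real kp - real l - 1) * p l) + (\<Sum>l = 1..k. (real kp + real l) * (real kp + real l - 1) * q l)
     = (\<Sum>l = 1..k. real l ^ 2 * (p l + q l) + (1 - 2 * real kp) * (real l * (p l - q l)) + (real kp * (real kp - 1)) * (p l + q l))"
    unfolding sum.distrib[symmetric] by (rule sum.cong[OF refl]) (simp add: power2_eq_square algebra_simps)
  have C2: "\<dots> = (\<Sum>l = 1..k. real l ^ 2 * (p l + q l)) + (1 - 2 * real kp) * mu + real kp * (real kp - 1) * (\<Sum>l = 1..k. p l + q l)"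
    unfolding mu_def by (simp only: sum.distrib flip: sum_distrib_left)
  have "(\<Sum>l = 1..k. real (kp - l - 1) * (real (kp - l) * p l))
      + (\<Sum>l = 1..k. real (kp + l - 1) * (real (kp + l) * q l)) - real (kp - 1) * real kp
      = (\<Sum>l = 1..k. (real kp - real l) * (real kp - real l - 1) * p l) + (\<Sum>l = 1..k. (real kp + real l) * (real kp + real l - 1) * q l) - real kp * (real kp - 1)"
    by (simp only: B1 B2 B3)
  also have "\<dots> = (\<Sum>l = 1..k. real l ^ 2 * (p l + q l)) + (1 - 2 * real kp) * mu + real kp * (real kp - 1) * (\<Sum>l = 1..k. p l + q l) - real kp * (real kp - 1)"
    by (simp only: C1 C2)
  also have "\<dots> = (\<Sum>l = 1..k. real l ^ 2 * (p l + q l)) + (1 - 2 * real kp) * mu"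
    using sum1 by simp
  finally have "(\<Sum>l = 1..k. real (kp - l - 1) * (real (kp - l) * p l))
      + (\<Sum>l = 1..k. real (kp + l - 1) * (real (kp + l) * q l)) - real (kp - 1) * real kp
      = (\<Sum>l = 1..k. real l ^ 2 * (p l + q l)) + (1 - 2 * real kp) * mu" .
  then show ?thesis using A by simp
qed

lemma order1: "order 1 (Gp 1) = (if mu = 0 then 2 else 1)"
proof -
  have o1: "order 1 (Gp 1) = Suc (order 1 (pderiv (Gp 1)))"
    using order_pderiv[OF Gp_nz Gp1_root] .
  show ?thesis
  proof (cases "mu = 0")
    case False
    then have "order 1 (pderiv (Gp 1)) = 0" by (intro order_0I) (simp add: d1_val)
    then show ?thesis using o1 False by simp
  next
    case True
    have kpos: "0 < real kp ^ 2 * (p kp + q kp)"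
      using kp_props(1,2) qnn[OF kp_props(1)] by (intro mult_pos_pos add_pos_nonneg) auto
    have nn2: "0 \<le> real i ^ 2 * (p i + q i)" if i: "i \<in> {1..k}" for i
      using pnn[OF i] qnn[OF i] by simp
    have pos: "(\<Sum>l = 1..k. real l ^ 2 * (p l + q l)) > 0"
      using sum_pos2[of "{1..k}" kp "\<lambda>l. real l ^ 2 * (p l + q l)"] kp_props(1) kpos nn2 by simp
    have e: "poly (pderiv (pderiv (Gp 1))) 1 = of_real (\<Sum>l = 1..k. real l ^ 2 * (p l + q l))"
      using d2_val unfolding True by (simp only: mult_zero_right add_0_right)
    have d2: "poly (pderiv (pderiv (Gp 1))) 1 \<noteq> 0"
      unfolding e of_real_eq_0_iff using pos by simp
    then have nz: "pderiv (Gp 1) \<noteq> 0" by auto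
    have "order 1 (pderiv (Gp 1)) = Suc (order 1 (pderiv (pderiv (Gp 1))))"
      using order_pderiv[OF nz] d1_val True by simp
    moreover have "order 1 (pderiv (pderiv (Gp 1))) = 0" using d2 by (rule order_0I)
    ultimately show ?thesis using o1 True by simp
  qed
qed

end


lemma rin_union: "(f::complex poly) \<noteq> 0 \<Longrightarrow> A \<inter> B = {} \<Longrightarrow> roots_in f (A \<union> B) = roots_in f A + roots_in f B"
proof -
  assume f: "f \<noteq> 0" and d: "A \<inter> B = {}"
  have fin: "finite {z. poly f z = 0}" using poly_roots_finite[OF f] .
  have "{z. poly f z = 0 \<and> z \<in> A \<union> B} = {z. poly f z = 0 \<and> z \<in> A} \<union> {z. poly f z = 0 \<and> z \<in> B}" by auto
  then show ?thesis unfolding roots_in_def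
    by (simp only:) (rule sum.union_disjoint, auto intro: finite_subset[OF _ fin] simp: d, use d in blast)
qed

lemma rin_mono: "(f::complex poly) \<noteq> 0 \<Longrightarrow> A \<subseteq> B \<Longrightarrow> roots_in f A \<le> roots_in f B"
proof -
  assume f: "f \<noteq> 0" and d: "A \<subseteq> B"
  have fin: "finite {z. poly f z = 0}" using poly_roots_finite[OF f] .
  show ?thesis unfolding roots_in_def
    by (rule sum_mono2) (use d in \<open>auto intro: finite_subset[OF _ fin]\<close>)
qed

lemma rin_cong: "(\<And>z. poly f z = 0 \<Longrightarrow> z \<in> A \<longleftrightarrow> z \<in> B) \<Longrightarrow> roots_in f A = roots_in f B"
  unfolding roots_in_def by (rule sum.cong) auto

lemma rin_single: "poly f a = 0 \<Longrightarrow> roots_in f {a} = order a f"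
proof -
  assume "poly f a = 0"
  then have "{z. poly f z = 0 \<and> z \<in> {a}} = {a}" by auto
  then show ?thesis unfolding roots_in_def by simp
qed

lemma rin_UNIV: "(f::complex poly) \<noteq> 0 \<Longrightarrow> roots_in f UNIV = degree f"
proof -
  assume f: "f \<noteq> 0"
  have "degree f = size (proots f)" by (simp add: size_proots_complex)
  also have "\<dots> = (\<Sum>x\<in>set_mset (proots f). count (proots f) x)" by (simp add: size_multiset_overloaded_eq)
  also have "\<dots> = roots_in f UNIV" unfolding roots_in_def using f by simp
  finally show ?thesis by simp
qed

context rw begin

lemma coeff_Gp1: "kp < n \<Longrightarrow> coeff (Gp 1) n = (if n - kp \<in> {1..k} then of_real (q (n - kp)) else 0)"
proof -
  assume n: "kp < n"
  have "coeff (Gp 1) n = (\<Sum>l = 1..k. if kp - l = n then of_real (p l) else 0)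
      + (\<Sum>l = 1..k. if kp + l = n then of_real (q l) else 0) - (if kp = n then 1 else 0)"
    unfolding Gp_def by (simp add: coeff_sum)
  also have "(\<Sum>l = 1..k. if kp - l = n then of_real (p l) else (0::complex)) = 0"
    using n by (intro sum.neutral) auto
  also have "(\<Sum>l = 1..k. if kp + l = n then of_real (q l) else (0::complex))
      = (\<Sum>l = 1..k. if l = n - kp then of_real (q l) else 0)"
    using n by (intro sum.cong) auto
  also have "\<dots> = (if n - kp \<in> {1..k} then of_real (q (n - kp)) else 0)"
    by (rule sum.delta) simp
  finally show ?thesis using n by simp
qed

lemma deg_G: "degree (Gp 1) = kp + kq"
proof (rule antisym)
  show "degree (Gp 1) \<le> kp + kq"
  proof (rule degree_le, intro allI impI)
    fix i assume i: "kp + kq < i"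
    then show "coeff (Gp 1) i = 0" using kq_props(3)[of "i - kp"] by (auto simp: coeff_Gp1)
  qed
  have "coeff (Gp 1) (kp + kq) \<noteq> 0" using kq_props(1,2) by (simp add: coeff_Gp1)
  then show "kp + kq \<le> degree (Gp 1)" by (rule le_degree)
qed

lemma good_delta: "\<exists>\<delta>. 0 < \<delta> \<and> \<delta> < 1 \<and> (\<forall>z. poly (Gp 1) z = 0 \<longrightarrow> cmod z \<noteq> 1 \<longrightarrow> \<bar>cmod z - 1\<bar> > \<delta>)"
proof -
  define R where "R = {z. poly (Gp 1) z = 0 \<and> cmod z \<noteq> 1}"
  have fin: "finite R" unfolding R_def using poly_roots_finite[OF Gp_nz[of 1]] by (rule finite_subset[rotated]) auto
  show ?thesis
  proof (cases "R = {}")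
    case True
    then show ?thesis by (intro exI[of _ "1/2"]) (auto simp: R_def)
  next
    case False
    define m where "m = Min ((\<lambda>z. \<bar>cmod z - 1\<bar>) ` R)"
    have mpos: "m > 0" unfolding m_def using fin False by (subst Min_gr_iff) (auto simp: R_def)
    have mle: "m \<le> \<bar>cmod z - 1\<bar>" if "z \<in> R" for z unfolding m_def using fin that by (intro Min_le) auto
    show ?thesis
      by (intro exI[of _ "min (1/2) (m/2)"]) (use mpos mle in \<open>auto simp: R_def\<close>, fastforce)
  qed
qed

definition "In = roots_in (Gp 1) {z. cmod z < 1}"

definition "good \<delta> \<longleftrightarrow> 0 < \<delta> \<and> \<delta> < 1 \<and> (\<forall>z. poly (Gp 1) z = 0 \<longrightarrow> cmod z \<noteq> 1 \<longrightarrow> \<bar>cmod z - 1\<bar> > \<delta>)"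

lemma good_mono: "good \<delta> \<Longrightarrow> 0 < \<delta>' \<Longrightarrow> \<delta>' \<le> \<delta> \<Longrightarrow> good \<delta>'"
  unfolding good_def by force

lemma good_in: "good \<delta> \<Longrightarrow> roots_in (Gp 1) {z. cmod z < 1 - \<delta>} = In"
  unfolding In_def good_def by (intro rin_cong) force

lemma good_out: "good \<delta> \<Longrightarrow> roots_in (Gp 1) {z. cmod z < 1 + \<delta>} = In + order 1 (Gp 1)"
proof -
  assume g: "good \<delta>"
  have "roots_in (Gp 1) {z. cmod z < 1 + \<delta>} = roots_in (Gp 1) ({z. cmod z < 1} \<union> {1})"
  proof (rule rin_cong)
    fix z assume z: "poly (Gp 1) z = 0"
    show "z \<in> {z. cmod z < 1 + \<delta>} \<longleftrightarrow> z \<in> {z. cmod z < 1} \<union> {1}"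
    proof (cases "cmod z = 1")
      case True then show ?thesis using circle_root[OF True z] g by (auto simp: good_def)
    next
      case False then show ?thesis using g z by (auto simp: good_def)
    qed
  qed
  also have "\<dots> = In + order 1 (Gp 1)"
    unfolding In_def by (subst rin_union[OF Gp_nz]) (auto simp: rin_single[OF Gp1_root])
  finally show ?thesis .
qed

lemma good_sphere: "good \<delta> \<Longrightarrow> cmod z = 1 - \<delta> \<or> cmod z = 1 + \<delta> \<Longrightarrow> poly (Gp 1) z \<noteq> 0"
  unfolding good_def by force

end

context rw begin

lemma In_val: "In = kp - (if mu \<ge> 0 then 1 else 0)"
proof -
  obtain \<delta> where g: "good \<delta>" using good_delta unfolding good_def by blast
  then have d0: "0 < \<delta>" "\<delta> < 1" by (auto simp: good_def)
  consider "mu < 0" | "mu > 0" | "mu = 0" by linarith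
  then show ?thesis
  proof cases
    case 1
    obtain d where d: "d > 0" "\<And>h. h > 0 \<Longrightarrow> h < d \<Longrightarrow> Phi (1 - h) < Phi 1"
      using DERIV_pos_inc_left[OF Phi_deriv] 1 by auto
    define h where "h = min \<delta> d / 2"
    have h: "h > 0" "h < d" "h \<le> \<delta>" using d d0 by (auto simp: h_def)
    have gh: "good h" using good_mono[OF g] h by simp
    have "roots_in (Gp 1) {z. cmod z < 1 - h} = kp"
      by (rule lemmaA) (use h d0 d Phi_1 in auto)
    then show ?thesis using good_in[OF gh] 1 by simp
  next
    case 2
    obtain d where d: "d > 0" "\<And>h. h > 0 \<Longrightarrow> h < d \<Longrightarrow> Phi (1 + h) < Phi 1"
      using DERIV_neg_dec_right[OF Phi_deriv] 2 by auto
    define h where "h = min \<delta> d / 2"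
    have h: "h > 0" "h < d" "h \<le> \<delta>" using d d0 by (auto simp: h_def)
    have gh: "good h" using good_mono[OF g] h by simp
    have "roots_in (Gp 1) {z. cmod z < 1 + h} = kp"
      by (rule lemmaA) (use h d0 d Phi_1 in auto)
    then show ?thesis using good_out[OF gh] 2 order1 by simp
  next
    case 3
    have P1: "Phi (1 - \<delta>) > 1" using Phi_ineq[of "1 - \<delta>"] d0 3 by simp
    have P2: "Phi (1 + \<delta>) > 1" using Phi_ineq[of "1 + \<delta>"] d0 3 by simp
    obtain e1 where e1: "e1 > 0" "\<And>c. \<bar>c - 1\<bar> < e1 \<Longrightarrow>
           roots_in (Gp c) {z. cmod z < 1 - \<delta>} = roots_in (Gp 1) {z. cmod z < 1 - \<delta>}"
      using lemmaB[of "1 - \<delta>"] good_sphere[OF g] d0 by auto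
    obtain e2 where e2: "e2 > 0" "\<And>c. \<bar>c - 1\<bar> < e2 \<Longrightarrow>
           roots_in (Gp c) {z. cmod z < 1 + \<delta>} = roots_in (Gp 1) {z. cmod z < 1 + \<delta>}"
      using lemmaB[of "1 + \<delta>"] good_sphere[OF g] d0 by auto
    define m where "m = min (min e1 e2) (min (Phi (1 - \<delta>) - 1) (Phi (1 + \<delta>) - 1))"
    have m: "m > 0" "m \<le> e1" "m \<le> e2" "m \<le> Phi (1 - \<delta>) - 1" "m \<le> Phi (1 + \<delta>) - 1"
      using e1(1) e2(1) P1 P2 unfolding m_def by auto
    define c where "c = 1 + m / 2"
    have c: "c > 1" "\<bar>c - 1\<bar> < e1" "\<bar>c - 1\<bar> < e2" "c < Phi (1 - \<delta>)" "c < Phi (1 + \<delta>)"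
      using m unfolding c_def by auto
    have cin: "roots_in (Gp c) {z. cmod z < 1 - \<delta>} = In" using e1(2)[OF c(2)] good_in[OF g] by simp
    have cout: "roots_in (Gp c) {z. cmod z < 1 + \<delta>} = In + 2" using e2(2)[OF c(3)] good_out[OF g] order1 3 by simp
    have cmid: "roots_in (Gp c) {z. cmod z < 1} = kp" by (rule lemmaA) (use c Phi_1 in auto)
    define hh where "hh x = Re (poly (Gp c) (of_real x))" for x
    have hh: "poly (Gp c) (of_real x) = of_real (hh x)" "hh x = x ^ kp * (Phi x - c)" if "x > 0" for x
      using poly_Gp_real[OF that, of c] by (auto simp: hh_def)
    have cont: "isCont hh x" for x unfolding hh_def by (intro continuous_intros isCont_Re continuous_ident)
    have h1: "hh 1 < 0" using hh(2)[of 1] Phi_1 c by simp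
    have h2: "hh (1 - \<delta>) > 0" using hh(2)[of "1 - \<delta>"] d0 c by simp
    have h3: "hh (1 + \<delta>) > 0" using hh(2)[of "1 + \<delta>"] d0 c by simp
    obtain x1 where x1: "1 - \<delta> \<le> x1" "x1 \<le> 1" "hh x1 = 0"
      using IVT2[of hh 1 0 "1 - \<delta>"] h1 h2 d0 cont by auto
    obtain x2 where x2: "1 \<le> x2" "x2 \<le> 1 + \<delta>" "hh x2 = 0"
      using IVT[of hh 1 0 "1 + \<delta>"] h1 h3 d0 cont by auto
    have x1': "1 - \<delta> < x1" "x1 < 1" using x1 h1 h2 by (auto simp: order.order_iff_strict)
    have x2': "1 < x2" "x2 < 1 + \<delta>" using x2 h1 h3 by (auto simp: order.order_iff_strict)
    have r1: "poly (Gp c) (of_real x1) = 0" using hh(1)[of x1] x1 x1' d0 by simp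
    have r2: "poly (Gp c) (of_real x2) = 0" using hh(1)[of x2] x2 x2' d0 by simp
    have o1: "order (of_real x1) (Gp c) \<ge> 1" using r1 Gp_nz[of c] order_root by (metis less_one not_less)
    have o2: "order (of_real x2) (Gp c) \<ge> 1" using r2 Gp_nz[of c] order_root by (metis less_one not_less)
    have "In + 1 \<le> kp"
    proof -
      have "In + 1 \<le> roots_in (Gp c) {z. cmod z < 1 - \<delta>} + roots_in (Gp c) {of_real x1}"
        using cin rin_single[OF r1] o1 by simp
      also have "\<dots> = roots_in (Gp c) ({z. cmod z < 1 - \<delta>} \<union> {of_real x1})"
        using x1' d0 by (subst rin_union[OF Gp_nz]) auto
      also have "\<dots> \<le> roots_in (Gp c) {z. cmod z < 1}"
        using x1' d0 by (intro rin_mono[OF Gp_nz]) auto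
      finally show ?thesis using cmid by simp
    qed
    moreover have "kp + 1 \<le> In + 2"
    proof -
      have "kp + 1 \<le> roots_in (Gp c) {z. cmod z < 1} + roots_in (Gp c) {of_real x2}"
        using cmid rin_single[OF r2] o2 by simp
      also have "\<dots> = roots_in (Gp c) ({z. cmod z < 1} \<union> {of_real x2})"
        using x2' d0 by (subst rin_union[OF Gp_nz]) auto
      also have "\<dots> \<le> roots_in (Gp c) {z. cmod z < 1 + \<delta>}"
        using x2' d0 by (intro rin_mono[OF Gp_nz]) auto
      finally show ?thesis using cout by simp
    qed
    ultimately show ?thesis using 3 by simp
  qed
qed

end

context rw begin

definition "cF n = (\<Sum>l = 1..k. if k - l = n then p l else 0) + (\<Sum>l = 1..k. if k + l = n then q l else 0) - (if k = n then 1 else 0)"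
definition "gg j = (if j < 2 * k then rc_gamma k p q j else 0)"

definition Fexp :: "complex poly" where
  "Fexp = (\<Sum>l = 1..k. monom (complex_of_real (p l)) (k - l))
        + (\<Sum>l = 1..k. monom (complex_of_real (q l)) (k + l)) - monom 1 k"

lemma coeff_psi: "coeff (rc_psi k p q) j = of_real (gg j)"
  unfolding rc_psi_def gg_def by (simp add: coeff_sum)

lemma coeff_Fexp: "coeff Fexp n = of_real (cF n)"
proof -
  have e: "complex_of_real (if b then x else 0) = (if b then complex_of_real x else 0)" for b x by simp
  show ?thesis unfolding Fexp_def cF_def by (simp add: coeff_sum of_real_sum e)
qed

lemma sum_ifp: "n < k \<Longrightarrow> (\<Sum>l = 1..k. if k - l = n then p l else 0) = p (k - n)"
proof -
  assume n: "n < k"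
  have "(\<Sum>l = 1..k. if k - l = n then p l else 0) = (\<Sum>l = 1..k. if l = k - n then p l else 0)"
    using n by (intro sum.cong) auto
  also have "\<dots> = p (k - n)" using n by (subst sum.delta) auto
  finally show ?thesis .
qed

lemma sum_ifq: "k < n \<Longrightarrow> n \<le> 2 * k \<Longrightarrow> (\<Sum>l = 1..k. if k + l = n then q l else 0) = q (n - k)"
proof -
  assume n: "k < n" "n \<le> 2 * k"
  have "(\<Sum>l = 1..k. if k + l = n then q l else 0) = (\<Sum>l = 1..k. if l = n - k then q l else 0)"
    using n by (intro sum.cong) auto
  also have "\<dots> = q (n - k)" using n by (subst sum.delta) auto
  finally show ?thesis .
qed

lemma tele: "(if n = 0 then 0 else gg (n - 1)) - gg n = cF n"
proof -
  have k0: "k \<ge> 1" using k1 .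
  consider "n = 0" | "0 < n" "n < k" | "n = k" | "k < n" "n \<le> 2 * k" | "2 * k < n" by linarith
  then show ?thesis
  proof cases
    case 1
    have "cF 0 = p k"
    proof -
      have "(\<Sum>l = 1..k. if k + l = 0 then q l else 0) = 0" by simp
      then show ?thesis unfolding cF_def using sum_ifp[of 0] k0 by simp
    qed
    moreover have "gg 0 = - p k" unfolding gg_def rc_gamma_def using k0 by simp
    ultimately show ?thesis using 1 by simp
  next
    case 2
    have "cF n = p (k - n)"
    proof -
      have "(\<Sum>l = 1..k. if k + l = n then q l else 0) = 0" using 2 by (intro sum.neutral) auto
      then show ?thesis unfolding cF_def using sum_ifp[of n] 2 by simp
    qed
    moreover have "gg (n - 1) = - (\<Sum>l = k - n + 1..k. p l)" unfolding gg_def rc_gamma_def using 2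
      by (simp add: Suc_diff_le)
    moreover have "gg n = - (\<Sum>l = k - n..k. p l)" unfolding gg_def rc_gamma_def using 2 by simp
    moreover have "(\<Sum>l = k - n..k. p l) = p (k - n) + (\<Sum>l = k - n + 1..k. p l)"
      by (subst sum.atLeast_Suc_atMost) auto
    ultimately show ?thesis using 2 by simp
  next
    case 3
    have "cF k = - 1"
    proof -
      have "(\<Sum>l = 1..k. if k - l = k then p l else 0) = 0" by (intro sum.neutral) auto
      moreover have "(\<Sum>l = 1..k. if k + l = k then q l else 0) = 0" by (intro sum.neutral) auto
      ultimately show ?thesis unfolding cF_def by simp
    qed
    moreover have "gg (k - 1) = - (\<Sum>l = 1..k. p l)" unfolding gg_def rc_gamma_def using k0 by simp
    moreover have "gg k = (\<Sum>l = 1..k. q l)" unfolding gg_def rc_gamma_def using k0 by simp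
    ultimately show ?thesis using 3 k0 sumpq by simp
  next
    case 4
    have "cF n = q (n - k)"
    proof -
      have "(\<Sum>l = 1..k. if k - l = n then p l else 0) = 0" using 4 by (intro sum.neutral) auto
      then show ?thesis unfolding cF_def using sum_ifq[of n] 4 by simp
    qed
    moreover have "gg (n - 1) = (\<Sum>l = n - k..k. q l)"
    proof -
      have "Suc (n - Suc k) = n - k" using 4 by simp
      then show ?thesis unfolding gg_def rc_gamma_def using 4 by simp
    qed
    moreover have "gg n = (\<Sum>l = n - k + 1..k. q l)"
    proof (cases "n = 2 * k")
      case True then show ?thesis unfolding gg_def using 4 by simp
    next
      case False then show ?thesis unfolding gg_def rc_gamma_def using 4 by simp
    qed
    moreover have "(\<Sum>l = n - k..k. q l) = q (n - k) + (\<Sum>l = n - k + 1..k. q l)"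
      using 4 by (subst sum.atLeast_Suc_atMost) auto
    ultimately show ?thesis using 4 by simp
  next
    case 5
    have "cF n = 0"
    proof -
      have "(\<Sum>l = 1..k. if k - l = n then p l else 0) = 0" using 5 by (intro sum.neutral) auto
      moreover have "(\<Sum>l = 1..k. if k + l = n then q l else 0) = 0" using 5 by (intro sum.neutral) auto
      ultimately show ?thesis unfolding cF_def using 5 by simp
    qed
    then show ?thesis using 5 unfolding gg_def by simp
  qed
qed

lemma psi_Fexp: "[:-1, 1:] * rc_psi k p q = Fexp"
proof (rule poly_eqI)
  fix n
  have "[:-1, 1:] * rc_psi k p q = pCons 0 (rc_psi k p q) - rc_psi k p q"
    by (simp add: mult_pCons_left)
  then have "coeff ([:-1, 1:] * rc_psi k p q) n = (if n = 0 then 0 else coeff (rc_psi k p q) (n - 1)) - coeff (rc_psi k p q) n"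
    by (simp add: coeff_pCons split: nat.split)
  also have "\<dots> = of_real ((if n = 0 then 0 else gg (n - 1)) - gg n)"
    by (simp add: coeff_psi)
  also have "\<dots> = coeff Fexp n" by (simp add: tele coeff_Fexp)
  finally show "coeff ([:-1, 1:] * rc_psi k p q) n = coeff Fexp n" .
qed

lemma Fexp_G: "Fexp = monom 1 (k - kp) * Gp 1"
proof -
  have kpk: "kp \<le> k" using kp_props(1) by simp
  have "poly Fexp z = poly (monom 1 (k - kp) * Gp 1) z" for z
  proof -
    have A: "poly Fexp z = (\<Sum>l = 1..k. of_real (p l) * z ^ (k - l)) + (\<Sum>l = 1..k. of_real (q l) * z ^ (k + l)) - z ^ k"
      unfolding Fexp_def by (simp add: poly_sum poly_monom)
    have B: "poly (monom 1 (k - kp) * Gp 1) z = (\<Sum>l = 1..k. of_real (p l) * (z ^ (k - kp) * z ^ (kp - l)))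
       + (\<Sum>l = 1..k. of_real (q l) * (z ^ (k - kp) * z ^ (kp + l))) - z ^ (k - kp) * z ^ kp"
      by (simp add: poly_Gp poly_monom sum_distrib_left algebra_simps)
    have C1: "(\<Sum>l = 1..k. of_real (p l) * (z ^ (k - kp) * z ^ (kp - l))) = (\<Sum>l = 1..k. of_real (p l) * z ^ (k - l))"
    proof (rule sum.cong[OF refl])
      fix l assume l: "l \<in> {1..k}"
      show "of_real (p l) * (z ^ (k - kp) * z ^ (kp - l)) = of_real (p l) * z ^ (k - l)"
      proof (cases "l \<le> kp")
        case True then have "k - kp + (kp - l) = k - l" using kpk by simp
        then show ?thesis by (simp add: power_add[symmetric])
      next
        case False then show ?thesis using kp_props(3)[OF l] by simp
      qed
    qed
    have C2: "(\<Sum>l = 1..k. of_real (q l) * (z ^ (k - kp) * z ^ (kp + l))) = (\<Sum>l = 1..k. of_real (q l) * z ^ (k + l))"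
    proof (rule sum.cong[OF refl])
      fix l
      have "k - kp + (kp + l) = k + l" using kpk by simp
      then show "of_real (q l) * (z ^ (k - kp) * z ^ (kp + l)) = of_real (q l) * z ^ (k + l)"
        by (simp add: power_add[symmetric])
    qed
    have C3: "z ^ (k - kp) * z ^ kp = z ^ k" using kpk by (simp add: power_add[symmetric])
    show ?thesis using A B C1 C2 C3 by simp
  qed
  then have "poly Fexp = poly (monom 1 (k - kp) * Gp 1)" by auto
  then show ?thesis by (simp add: poly_eq_poly_eq_iff)
qed

end


lemma rin_transfer:
  fixes f g :: "complex poly"
  assumes "f \<noteq> 0" "g \<noteq> 0" "\<And>z. z \<in> S \<Longrightarrow> order z f = order z g"
  shows "roots_in f S = roots_in g S"
proof -
  have "poly f z = 0 \<and> z \<in> S \<longleftrightarrow> poly g z = 0 \<and> z \<in> S" for z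
  proof (cases "z \<in> S")
    case True
    then show ?thesis using order_root[of f z] order_root[of g z] assms(1,2) assms(3)[OF True] by simp
  qed simp
  then have "{z. poly f z = 0 \<and> z \<in> S} = {z. poly g z = 0 \<and> z \<in> S}" by blast
  then show ?thesis unfolding roots_in_def using assms(3) by (auto intro: sum.cong)
qed

lemma rin_single': "(f::complex poly) \<noteq> 0 \<Longrightarrow> roots_in f {a} = order a f"
proof (cases "poly f a = 0")
  case True then show ?thesis by (rule rin_single)
next
  case False
  then have "{z. poly f z = 0 \<and> z \<in> {a}} = {}" by auto
  then show ?thesis unfolding roots_in_def using order_0I[OF False] by simp
qed

context rw begin

lemma psi_nz: "rc_psi k p q \<noteq> 0"
proof
  assume "rc_psi k p q = 0"
  then have "monom 1 (k - kp) * Gp 1 = 0" using psi_Fexp Fexp_G by simp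
  then show False using Gp_nz[of 1] by (simp add: monom_eq_0_iff)
qed

lemma prod_nz: "monom 1 (k - kp) * Gp 1 \<noteq> 0"
  using Gp_nz[of 1] by simp

lemma order_rel: "order z ([:-1, 1:] * rc_psi k p q) = order z (monom 1 (k - kp) * Gp 1)"
  using psi_Fexp Fexp_G by simp

lemma ord_lin: "order z [:-1, 1:] = (if z = 1 then 1 else 0)"
proof (cases "z = 1")
  case True
  then show ?thesis using order_power_n_n[of 1 1] by simp
next
  case False
  have "order z [:-1, 1:] = 0" using False by (intro order_0I) simp
  then show ?thesis using False by simp
qed

lemma ord_monom: "z \<noteq> 0 \<Longrightarrow> order z (monom (1::complex) n) = 0"
  by (intro order_0I) (simp add: poly_monom)

lemma order_psi: "z \<noteq> 0 \<Longrightarrow> order z (rc_psi k p q) + (if z = 1 then 1 else 0) = order z (Gp 1)"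
proof -
  assume z: "z \<noteq> 0"
  have nz: "[:-1, 1:] * rc_psi k p q \<noteq> 0" using prod_nz psi_Fexp Fexp_G by simp
  have a: "order z ([:-1, 1:] * rc_psi k p q) = order z [:-1, 1:] + order z (rc_psi k p q)"
    using nz by (rule order_mult)
  have b: "order z (monom 1 (k - kp) * Gp 1) = order z (monom 1 (k - kp)) + order z (Gp 1)"
    using prod_nz by (rule order_mult)
  have c: "order z (monom 1 (k - kp)) = 0" using ord_monom[OF z] .
  have r: "order z ([:-1, 1:] * rc_psi k p q) = order z (monom 1 (k - kp) * Gp 1)" by (rule order_rel)
  have "order z (rc_psi k p q) + order z [:-1, 1:] = order z (Gp 1)" using a b c r by linarith
  then show ?thesis using ord_lin[of z] by simp
qed

lemma final:
  "roots_in (rc_psi k p q) {z. z \<noteq> 0 \<and> cmod z < 1} = kp - (if mu \<ge> 0 then 1 else 0) \<and>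
   roots_in (rc_psi k p q) {z. cmod z > 1} = kq - (if mu \<le> 0 then 1 else 0) \<and>
   roots_in (rc_psi k p q) {z. cmod z = 1} = (if mu = 0 then 1 else 0)"
proof -
  let ?G = "Gp 1" and ?P = "rc_psi k p q"
  have G0: "poly ?G 0 \<noteq> 0" using Gp_0 kp_props(2) by simp
  have A: "roots_in ?P {z. z \<noteq> 0 \<and> cmod z < 1} = In"
  proof -
    have "roots_in ?P {z. z \<noteq> 0 \<and> cmod z < 1} = roots_in ?G {z. z \<noteq> 0 \<and> cmod z < 1}"
    proof (rule rin_transfer[OF psi_nz Gp_nz])
      fix z assume "z \<in> {z. z \<noteq> 0 \<and> cmod z < 1}"
      then have "z \<noteq> 0" "z \<noteq> 1" by auto
      then show "order z ?P = order z ?G" using order_psi[of z] by simp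
    qed
    also have "\<dots> = In" unfolding In_def
    proof (rule rin_cong)
      fix z assume "poly ?G z = 0"
      then have "z \<noteq> 0" using G0 by auto
      then show "z \<in> {z. z \<noteq> 0 \<and> cmod z < 1} \<longleftrightarrow> z \<in> {z. cmod z < 1}" by simp
    qed
    finally show ?thesis .
  qed
  have circG: "roots_in ?G {z. cmod z = 1} = order 1 ?G"
  proof -
    have "roots_in ?G {z. cmod z = 1} = roots_in ?G {1}"
      by (rule rin_cong) (auto dest: circle_root)
    then show ?thesis by (simp add: rin_single[OF Gp1_root])
  qed
  have B: "roots_in ?P {z. cmod z > 1} = kp + kq - In - order 1 ?G"
  proof -
    have "roots_in ?P {z. cmod z > 1} = roots_in ?G {z. cmod z > 1}"
    proof (rule rin_transfer[OF psi_nz Gp_nz])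
      fix z assume "z \<in> {z. cmod z > 1}"
      then have "z \<noteq> 0" "z \<noteq> 1" by auto
      then show "order z ?P = order z ?G" using order_psi[of z] by simp
    qed
    moreover have "kp + kq = In + order 1 ?G + roots_in ?G {z. cmod z > 1}"
    proof -
      have "kp + kq = roots_in ?G UNIV" using rin_UNIV[OF Gp_nz] deg_G by simp
      also have "UNIV = ({z. cmod z < 1} \<union> {z. cmod z = 1}) \<union> {z. cmod z > 1}" by auto
      also have "roots_in ?G \<dots> = roots_in ?G {z. cmod z < 1} + roots_in ?G {z. cmod z = 1} + roots_in ?G {z. cmod z > 1}"
        by (subst rin_union[OF Gp_nz], force, subst rin_union[OF Gp_nz], force, simp)
      finally show ?thesis using circG In_def by simp
    qed
    ultimately show ?thesis by simp
  qed
  have C: "roots_in ?P {z. cmod z = 1} = order 1 ?G - 1"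
  proof -
    have "roots_in ?P {z. cmod z = 1} = roots_in ?P {1}"
    proof (rule rin_cong)
      fix z assume z: "poly ?P z = 0"
      show "z \<in> {z. cmod z = 1} \<longleftrightarrow> z \<in> {1}"
      proof
        assume "z \<in> {z. cmod z = 1}"
        then have c: "cmod z = 1" by simp
        then have "z \<noteq> 0" by auto
        have "poly ([:-1, 1:] * ?P) z = 0" using z by simp
        moreover have eqP: "[:-1, 1:] * ?P = monom 1 (k - kp) * ?G" by (simp only: psi_Fexp Fexp_G)
        ultimately have "poly (monom 1 (k - kp) * ?G) z = 0" by (simp only:)
        then have "poly ?G z = 0" using \<open>z \<noteq> 0\<close> by (simp add: poly_monom)
        then show "z \<in> {1}" using circle_root[OF c] by simp
      qed simp
    qed
    also have "\<dots> = order 1 ?P" by (rule rin_single'[OF psi_nz])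
    also have "\<dots> = order 1 ?G - 1" using order_psi[of 1] by simp
    finally show ?thesis .
  qed
  show ?thesis using A B C In_val order1 kp_props(1) kq_props(1) by auto
qed

end

theorem mainTheorem6:
  fixes k :: nat and p q :: "nat \<Rightarrow> real"
  assumes "k \<ge> 1"
    and "\<And>j. j \<in> {1..k} \<Longrightarrow> p j \<ge> 0"
    and "\<And>j. j \<in> {1..k} \<Longrightarrow> q j \<ge> 0"
    and "(\<Sum>j = 1..k. p j + q j) = 1"
    and "(\<Sum>j = 1..k. p j) > 0"
    and "(\<Sum>j = 1..k. q j) > 0"
    and "Gcd {j \<in> {1..k}. p j + q j > 0} = 1"
  defines "kp \<equiv> Max {j \<in> {1..k}. p j > 0}"
    and "kq \<equiv> Max {j \<in> {1..k}. q j > 0}"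
    and "\<mu> \<equiv> (\<Sum>j = 1..k. real j * (p j - q j))"
  shows "roots_in (rc_psi k p q) {z. z \<noteq> 0 \<and> cmod z < 1} = kp - (if \<mu> \<ge> 0 then 1 else 0) \<and>
         roots_in (rc_psi k p q) {z. cmod z > 1} = kq - (if \<mu> \<le> 0 then 1 else 0) \<and>
         roots_in (rc_psi k p q) {z. cmod z = 1} = (if \<mu> = 0 then 1 else 0)"
proof -
  have R: "rw k p q" by (unfold_locales) (use assms(1-7) in auto)
  show ?thesis using rw.final[OF R] unfolding kp_def kq_def \<mu>_def rw.kp_def[OF R] rw.kq_def[OF R] rw.mu_def[OF R] .
qed

end
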